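(* Let $\ell>1$ be an odd integer. There exists $N_\ell\in\mathbb{N}$ such that, with the relation $\sim$ defined using $N=N_\ell$, the following holds. One can associate to each interval $J\subset\mathbb{R}_+$ a parallelogram $R(J)\subset\mathbb{R}^2$ such that $S_\ell(\tau,\tau')\subset R(\tau+\tau')$ for all dyadic intervals $\tau\sim\tau'$ in $\mathbb{R}_+$; moreover there exist $\beta_\ell>0$ and $\widetilde C_\ell\in\mathbb{N}$ such that for every pair of dyadic intervals $\tau\sim\tau'$ in $\mathbb{R}_+$, $$\#\{(\tau_1,\tau_1'):\ \tau_1\sim\tau_1'\subset\mathbb{R}_+ \text{ dyadic},\ (1+\beta_\ell)R(\tau+\tau')\cap(1+\beta_\ell)R(\tau_1+\tau_1')\ne\emptyset\}\le\widetilde C_\ell .$$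
   Context: $S_\ell(\tau,\tau'):=\{(\xi+\xi',\xi^\ell+(\xi')^\ell):\xi\in\tau,\xi'\in\tau'\}$. For a parallelogram $R$ and $\beta>0$, $(1+\beta)R$ is its dilate by factor $1+\beta$ about its center. A dyadic interval is $[k,k+1)2^j$ with $k,j\in\mathbb{Z}$, with length $|\tau|$ and center $c(\tau)$; $m$-parent = dyadic interval of length $2^m|\tau|$ containing $\tau$; two intervals are adjacent if they have equal length and share an endpoint; $\tau\sim\tau'$ means $|\tau|=|\tau'|$, the $m$-parents of $\tau,\tau'$ are not adjacent for $m=0,\dots,N-1$, and their $N$-parents are adjacent. $\tau+\tau'$ is the Minkowski sum. *)

theory Defs
  imports "HOL-Analysis.Analysis"
begin

definition dint :: "int \<Rightarrow> int \<Rightarrow> real set" where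
  "dint k j = {x. of_int k * 2 powr of_int j \<le> x \<and> x < (of_int k + 1) * 2 powr of_int j}"

definition dyadic :: "real set \<Rightarrow> bool" where
  "dyadic I \<longleftrightarrow> (\<exists>k j. I = dint k j)"

text \<open>The m-parent of dint k j is the dyadic interval of length 2^m 2^j containing it,
  namely dint (k div 2^m) (j+m).\<close>
definition dparent :: "nat \<Rightarrow> int \<Rightarrow> int \<Rightarrow> real set" where
  "dparent m k j = dint (k div 2 ^ m) (j + int m)"

definition adjacent :: "real set \<Rightarrow> real set \<Rightarrow> bool" where
  "adjacent I J \<longleftrightarrow> (\<exists>a b j. I = dint a j \<and> J = dint b j \<and> \<bar>a - b\<bar> = 1)"

definition dsim :: "nat \<Rightarrow> real set \<Rightarrow> real set \<Rightarrow> bool" where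
  "dsim N \<tau> \<tau>' \<longleftrightarrow> (\<exists>k k' j. \<tau> = dint k j \<and> \<tau>' = dint k' j \<and>
     (\<forall>m<N. \<not> adjacent (dparent m k j) (dparent m k' j)) \<and>
     adjacent (dparent N k j) (dparent N k' j))"

definition msum :: "real set \<Rightarrow> real set \<Rightarrow> real set" where
  "msum A B = {x + y | x y. x \<in> A \<and> y \<in> B}"

definition Sl :: "nat \<Rightarrow> real set \<Rightarrow> real set \<Rightarrow> (real \<times> real) set" where
  "Sl l \<tau> \<tau>' = {(\<xi> + \<xi>', \<xi> ^ l + \<xi>' ^ l) | \<xi> \<xi>'. \<xi> \<in> \<tau> \<and> \<xi>' \<in> \<tau>'}"

definition pgram :: "real \<times> real \<Rightarrow> real \<times> real \<Rightarrow> real \<times> real \<Rightarrow> (real \<times> real) set" where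
  "pgram c u v = {c + s *\<^sub>R u + t *\<^sub>R v | s t. \<bar>s\<bar> \<le> 1 \<and> \<bar>t\<bar> \<le> 1}"

definition nondeg :: "real \<times> real \<Rightarrow> real \<times> real \<Rightarrow> bool" where
  "nondeg u v \<longleftrightarrow> fst u * snd v - snd u * fst v \<noteq> 0"

definition dil_pgram :: "real \<Rightarrow> real \<times> real \<Rightarrow> real \<times> real \<Rightarrow> real \<times> real \<Rightarrow> (real \<times> real) set" where
  "dil_pgram \<beta> c u v = pgram c ((1 + \<beta>) *\<^sub>R u) ((1 + \<beta>) *\<^sub>R v)"

end

theory Submission
  imports Defs
begin


lemma fg_bounds:
  fixes w :: real
  assumes "\<bar>w\<bar> \<le> 1"
  shows "2 \<le> (1+w)^n + (1-w)^n \<and> (1+w)^n + (1-w)^n \<le> 2 + 4^n * w^2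
       \<and> 0 \<le> w * ((1+w)^n - (1-w)^n) \<and> w * ((1+w)^n - (1-w)^n) \<le> 4^n * w^2"
proof (induction n)
  case 0
  then show ?case by simp
next
  case (Suc n)
  define f where "f = (1+w)^n + (1-w)^n"
  define g where "g = (1+w)^n - (1-w)^n"
  have f1: "(1+w)^Suc n + (1-w)^Suc n = f + w*g" unfolding f_def g_def by (simp add: algebra_simps)
  have g1: "w*((1+w)^Suc n - (1-w)^Suc n) = w*g + w^2*f" unfolding f_def g_def by (simp add: algebra_simps power2_eq_square)
  have IH: "2 \<le> f" "f \<le> 2 + 4^n*w^2" "0 \<le> w*g" "w*g \<le> 4^n*w^2" using Suc unfolding f_def g_def by auto
  have w2: "w^2 \<le> 1" using assms by (simp add: abs_square_le_1)
  have w0: "0 \<le> w^2" by simp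
  have p4: "(1::real) \<le> 4^n" by simp
  have "w^2*f \<le> w^2*(2 + 4^n*w^2)" using IH(2) w0 by (rule mult_left_mono)
  also have "\<dots> \<le> w^2*(2 + 4^n)" using w2 w0 p4 by (intro mult_left_mono) (auto intro: mult_left_le)
  finally have A: "w^2*f \<le> w^2*(2 + 4^n)" .
  have B: "0 \<le> w^2*f" using IH(1) by simp
  have C: "w^2*2 \<le> w^2*(2*4^n)" using w0 p4 by (intro mult_left_mono) auto
  have D: "w*g*1 \<le> 4^n*w^2" using IH by simp
  have E: "0 \<le> w^2*f" using B .
  show ?case unfolding f1 g1 using IH A B C
    by (auto simp: algebra_simps)
qed

lemma r_bound:
  fixes v :: real
  assumes "\<bar>v\<bar> \<le> 1"
  shows "0 \<le> (1+v)^n - 1 - real n * v \<and> (1+v)^n - 1 - real n * v \<le> 4^n * v^2"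
proof (induction n)
  case 0
  then show ?case by simp
next
  case (Suc n)
  define r where "r = (1+v)^n - 1 - real n * v"
  have e: "(1+v)^Suc n - 1 - real (Suc n) * v = (1+v)* r + n * v^2" unfolding r_def
    by (simp add: algebra_simps power2_eq_square)
  have IH: "0 \<le> r" "r \<le> 4^n * v^2" using Suc unfolding r_def by auto
  have v0: "0 \<le> 1 + v" "1+v \<le> 2" using assms by auto
  have a: "(1+v)* r \<le> 2*(4^n * v^2)" using IH v0 by (intro mult_mono) auto
  have b: "real n \<le> 4^n" 
  proof -
    have "real n \<le> 2^n" using less_exp[of n] by (metis less_imp_le of_nat_le_iff of_nat_numeral of_nat_power)
    also have "(2::real)^n \<le> 4^n" by (rule power_mono) auto
    finally show ?thesis .
  qed
  have c: "n * v^2 \<le> 4^n * v^2" using b by (simp add: mult_right_mono)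
  show ?case unfolding e using a c IH v0 by (auto intro!: add_nonneg_nonneg mult_nonneg_nonneg)
qed
lemma f_lower:
  fixes w :: real
  assumes "\<bar>w\<bar> \<le> 1" "2 \<le> n"
  shows "2 + 2*w^2 \<le> (1+w)^n + (1-w)^n"
  using assms(2)
proof (induction n rule: nat_induct_at_least)
  case base
  then show ?case by (simp add: power2_eq_square algebra_simps)
next
  case (Suc n)
  have "(1+w)^Suc n + (1-w)^Suc n = ((1+w)^n + (1-w)^n) + w*((1+w)^n - (1-w)^n)"
    by (simp add: algebra_simps)
  then show ?case using Suc fg_bounds[OF assms(1), of n] by linarith
qed

lemma pow_near1:
  fixes v mu :: real
  assumes "\<bar>v\<bar> \<le> 2*mu" "0 \<le> mu" "4*real l*mu \<le> 1" "32*4^l*mu^2 \<le> 1"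
  shows "1/2 \<le> (1+v)^l" "(1+v)^l \<le> 2" "0 \<le> (1+v)^l - 1 - real l * v"
        "(1+v)^l - 1 - real l * v \<le> 4*4^l*mu^2"
proof -
  have l1: "real l \<ge> 0" by simp
  have mu4: "mu \<le> 1/4" using assms(3,4)
  proof (cases "l = 0")
    case True
    then have "32*mu^2 \<le> 1" using assms(4) by simp
    show ?thesis
    proof (rule ccontr)
      assume "\<not> mu \<le> 1/4"
      then have "(1/4)*(1/4) < mu*mu" by (intro mult_strict_mono) auto
      then show False using \<open>32*mu^2 \<le> 1\<close> by (simp add: power2_eq_square)
    qed
  next
    case False
    then have "real l \<ge> 1" by simp
    then have "4*mu \<le> 4*real l*mu" using assms(2) by (simp add: mult_right_mono)
    then show ?thesis using assms(3) by simp
  qed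
  have v1: "\<bar>v\<bar> \<le> 1" using assms(1) mu4 by simp
  note R = r_bound[OF v1, of l]
  have vv: "v^2 \<le> (2*mu)^2" 
  proof -
    have "\<bar>v\<bar>^2 \<le> (2*mu)^2" using assms(1) by (intro power_mono) auto
    then show ?thesis by simp
  qed
  have "4^l* v^2 \<le> 4^l*(2*mu)^2" using vv by simp
  also have "\<dots> = 4*4^l*mu^2" by (simp add: power_mult_distrib)
  finally have "4^l* v^2 \<le> 4*4^l*mu^2" .
  then have r1: "(1+v)^l - 1 - real l * v \<le> 4*4^l*mu^2" using R by linarith
  have lv: "\<bar>real l * v\<bar> \<le> 1/2"
  proof -
    have "\<bar>real l * v\<bar> = real l * \<bar>v\<bar>" by (simp add: abs_mult)
    also have "\<dots> \<le> real l * (2*mu)" using assms(1) by (simp add: mult_left_mono)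
    finally show ?thesis using assms(3) by simp
  qed
  have "4*4^l*mu^2 \<le> 1/8" using assms(4) by simp
  then show "1/2 \<le> (1+v)^l" "(1+v)^l \<le> 2" "0 \<le> (1+v)^l - 1 - real l * v"
        "(1+v)^l - 1 - real l * v \<le> 4*4^l*mu^2" using R r1 lv by (auto simp: abs_le_iff)
qed


lemma KPsi:
  fixes l :: nat and P h k k' xi xi' cx mu v :: real
  assumes l2: "2 \<le> l" and P1: "4*real l \<le> P" and P2: "1024*4^l \<le> P^2"
    and h: "0 < h" and k: "0 \<le> k" "0 \<le> k'" and d: "P \<le> \<bar>k-k'\<bar>" "\<bar>k-k'\<bar> \<le> 4*P"
    and xi: "k*h \<le> xi" "xi \<le> (k+1)*h" and xi': "k'*h \<le> xi'" "xi' \<le> (k'+1)*h"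
    and cx: "cx = (k+k'+1)*h" and mu: "mu = 1/(k+k'+1)" and v: "v = (xi+xi'-cx)/cx"
  shows "P^2*mu^2/32 \<le> (xi^l+xi'^l)/(2*(cx/2)^l) - 1 - real l * v"
    and "(xi^l+xi'^l)/(2*(cx/2)^l) - 1 - real l * v \<le> 101*4^l*P^2*mu^2"
proof -
  define s where "s = k+k'"
  have P8: "8 \<le> P" using P1 l2 by linarith
  have sP: "P \<le> s" using d k unfolding s_def by linarith
  have s1: "0 < s+1" using sP P8 by linarith
  have mus: "mu*(s+1) = 1" using mu s1 unfolding s_def by simp
  have mu0: "0 < mu" using mu s1 unfolding s_def by simp
  have cxp: "cx = (s+1)*h" using cx s_def by simp
  have cx0: "0 < cx" using cxp s1 h by simp
  have "mu*cx = (mu*(s+1))*h" using cxp by (simp add: mult.assoc)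
  then have hmu: "h = mu*cx" using mus by simp
  have Pmu: "P*mu \<le> 1"
  proof -
    have "P*mu \<le> (s+1)*mu" using sP mu0 by (intro mult_right_mono) auto
    then show ?thesis using mus by (simp add: algebra_simps)
  qed
  have PM2: "P^2*mu^2 \<le> 1"
  proof -
    have "(P*mu)^2 \<le> 1^2" using Pmu P8 mu0 by (intro power_mono) auto
    then show ?thesis by (simp add: power_mult_distrib)
  qed
  have c1: "4*real l*mu \<le> 1"
  proof -
    have "4*real l*mu \<le> P*mu" using P1 mu0 by (intro mult_right_mono) auto
    then show ?thesis using Pmu by simp
  qed
  have c2: "32*4^l*mu^2 \<le> 1"
  proof -
    have "1024*4^l*mu^2 \<le> P^2*mu^2" using P2 mu0 by (intro mult_right_mono) auto
    then show ?thesis using PM2 by simp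
  qed
  define x where "x = xi+xi'"
  have xlo: "s*h \<le> x" and xhi: "x \<le> (s+2)*h" using xi xi' unfolding x_def s_def by (auto simp: algebra_simps)
  have "0 < s*h" using sP P8 h by simp
  then have x0: "0 < x" using xlo by linarith
  have xi0: "0 \<le> xi" "0 \<le> xi'" using xi xi' k h by (smt (verit) mult_nonneg_nonneg)+
  have xcx: "\<bar>x - cx\<bar> \<le> h" using xlo xhi cxp by (auto simp: algebra_simps abs_le_iff)
  have vmu: "\<bar>v\<bar> \<le> mu"
  proof -
    have "\<bar>v\<bar> = \<bar>x - cx\<bar>/cx" using v cx0 unfolding x_def by (simp add: abs_div)
    also have "\<dots> \<le> h/cx" using xcx cx0 by (simp add: divide_right_mono)
    also have "\<dots> = mu" using hmu cx0 by simp
    finally show ?thesis .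
  qed
  have v2: "\<bar>v\<bar> \<le> 2*mu" using vmu mu0 by simp
  note PN = pow_near1[OF v2 less_imp_le[OF mu0] c1 c2]
  define z where "z = x/2"
  define w where "w = (xi - xi')/x"
  have wx: "w*x = xi - xi'" unfolding w_def using x0 by simp
  have wxa: "\<bar>w\<bar>*x = \<bar>xi - xi'\<bar>" using wx x0 by (metis abs_mult abs_of_pos)
  have xiz: "xi = z*(1+w)" "xi' = z*(1-w)" unfolding z_def using wx x_def by (auto simp: algebra_simps)
  have w1: "\<bar>w\<bar> \<le> 1" unfolding w_def using xi0 x0 by (auto simp: abs_div x_def divide_le_eq_1)
  define F where "F = (1+w)^l + (1-w)^l"
  have sumF: "xi^l + xi'^l = z^l * F" unfolding F_def xiz power_mult_distrib by (rule distrib_left[symmetric])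
  have xv: "x = cx*(1+v)" using v cx0 unfolding x_def by (simp add: field_simps)
  have zv: "z = (cx/2)*(1+v)" unfolding z_def xv by simp
  have cx2: "0 < (cx/2)^l" using cx0 by simp
  have main: "(xi^l+xi'^l)/(2*(cx/2)^l) = (1+v)^l*F/2"
    unfolding sumF zv power_mult_distrib using cx2 cx0 by (simp add: field_simps)
  define R where "R = (1+v)^l - 1 - real l * v"
  have Psi: "(xi^l+xi'^l)/(2*(cx/2)^l) - 1 - real l * v = R + (1+v)^l*((F-2)/2)"
    unfolding main R_def by (simp add: field_simps)
  have Fb: "2*w^2 \<le> F-2" "F - 2 \<le> 4^l*w^2" using f_lower[OF w1 l2] fg_bounds[OF w1, of l] unfolding F_def by auto
  have eab: "\<bar>(xi - xi') - (k-k')*h\<bar> \<le> h" using xi xi' by (auto simp: algebra_simps abs_le_iff)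
  have eab2: "\<bar>(k-k')*h\<bar> = \<bar>k-k'\<bar>*h" using h by (simp add: abs_mult)
  have tri1: "\<bar>(k-k')*h\<bar> - \<bar>xi-xi'\<bar> \<le> \<bar>(xi - xi') - (k-k')*h\<bar>"
    using abs_triangle_ineq2[of "(k-k')*h" "xi-xi'"] by (simp add: abs_minus_commute)
  have tri2: "\<bar>xi-xi'\<bar> - \<bar>(k-k')*h\<bar> \<le> \<bar>(xi - xi') - (k-k')*h\<bar>"
    using abs_triangle_ineq2[of "xi-xi'" "(k-k')*h"] by simp
  have e3: "(\<bar>k-k'\<bar> - 1)*h = \<bar>k-k'\<bar>*h - h" "(\<bar>k-k'\<bar> + 1)*h = \<bar>k-k'\<bar>*h + h" by (simp_all add: algebra_simps)
  have dlo: "P*h/2 \<le> \<bar>xi - xi'\<bar>"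
  proof -
    have "(\<bar>k-k'\<bar> - 1)*h \<le> \<bar>xi - xi'\<bar>" unfolding e3 using eab eab2 tri1 tri2 by linarith
    moreover have "P*h/2 \<le> (\<bar>k-k'\<bar> - 1)*h" 
    proof -
      have "P/2 \<le> \<bar>k-k'\<bar> - 1" using d P8 by simp
      then have "P/2*h \<le> (\<bar>k-k'\<bar> - 1)*h" using h by (intro mult_right_mono) auto
      then show ?thesis by simp
    qed
    ultimately show ?thesis by linarith
  qed
  have dhi: "\<bar>xi - xi'\<bar> \<le> (4*P+1)*h"
  proof -
    have "\<bar>xi - xi'\<bar> \<le> (\<bar>k-k'\<bar> + 1)*h" unfolding e3 using eab eab2 tri1 tri2 by linarith
    moreover have "(\<bar>k-k'\<bar> + 1)*h \<le> (4*P+1)*h" using d h by (intro mult_right_mono) auto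
    ultimately show ?thesis by linarith
  qed
  have wlo: "P*mu/4 \<le> \<bar>w\<bar>"
  proof -
    have "P*mu/4*x \<le> P*mu/4*((s+2)*h)" using xhi P8 mu0 by (intro mult_left_mono) auto
    also have "\<dots> \<le> P*mu/4*(2*(s+1)*h)" using P8 mu0 h s1 sP by (intro mult_left_mono) auto
    also have "\<dots> = P*h/2 * (mu*(s+1))" by (simp add: algebra_simps)
    also have "\<dots> = P*h/2" using mus by simp
    also have "\<dots> \<le> \<bar>w\<bar>*x" using dlo wxa by simp
    finally show ?thesis using x0 by simp
  qed
  have whi: "\<bar>w\<bar> \<le> 10*P*mu"
  proof -
    have Ps1: "8*P \<le> P* s" using sP P8 by (simp add: mult_right_mono mult.commute mult_left_mono)
    have Ps2: "8* s \<le> P* s" using sP P8 by (simp add: mult_right_mono)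
    have Ps: "8*P \<le> P* s" "8* s \<le> P* s" "8 \<le> P* s" using Ps1 Ps2 P8 by linarith+
    have A: "(4*P+1)*(s+1) \<le> 10*P* s" using Ps by (simp add: algebra_simps)
    have "\<bar>w\<bar>*x \<le> (4*P+1)*h" using dhi wxa by simp
    also have "\<dots> = (4*P+1)*h*(mu*(s+1))" using mus by simp
    also have "\<dots> = (4*P+1)*(s+1)*h*mu" by (simp add: algebra_simps)
    also have "\<dots> \<le> 10*P* s*h*mu" using A h mu0 by (simp add: mult_right_mono)
    also have "\<dots> \<le> 10*P*mu*x" using xlo P8 mu0 by (simp add: algebra_simps mult_left_mono)
    finally show ?thesis using x0 by simp
  qed
  have w2lo: "P^2*mu^2/16 \<le> w^2"
  proof -
    have "(P*mu/4)^2 \<le> \<bar>w\<bar>^2" using wlo P8 mu0 by (intro power_mono) auto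
    then show ?thesis by (simp add: power_mult_distrib power_divide)
  qed
  have w2hi: "w^2 \<le> 100*P^2*mu^2"
  proof -
    have "\<bar>w\<bar>^2 \<le> (10*P*mu)^2" using whi by (intro power_mono) auto
    then show ?thesis by (simp add: power_mult_distrib)
  qed
  have R0: "0 \<le> R" and R1: "R \<le> 4*4^l*mu^2" using PN unfolding R_def by auto
  have pw: "1/2 \<le> (1+v)^l" "(1+v)^l \<le> 2" using PN by auto
  have "0 \<le> F-2" using Fb(1) zero_le_power2[of w] by linarith
  then have Fn: "0 \<le> (F-2)/2" by simp
  have wF: "w^2 \<le> (F-2)/2" using Fb(1) by simp
  have lo: "(1/2)*w^2 \<le> (1+v)^l*((F-2)/2)"
    using mult_mono[OF pw(1) wF] pw(1) by simp
  have wF2: "(F-2)/2 \<le> 4^l*w^2/2" using Fb(2) by simp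
  have hi: "(1+v)^l*((F-2)/2) \<le> 2*(4^l*w^2/2)"
    using mult_mono[OF pw(2) wF2] Fn by simp
  show "P^2*mu^2/32 \<le> (xi^l+xi'^l)/(2*(cx/2)^l) - 1 - real l * v"
    unfolding Psi using lo w2lo R0 by linarith
  have "4^l*w^2 \<le> 4^l*(100*P^2*mu^2)" using w2hi by simp
  moreover have "4*4^l*mu^2 \<le> 4^l*(P^2*mu^2)"
  proof -
    have "8*8 \<le> P*P" using P8 by (intro mult_mono) auto
    then have "4 \<le> P^2" by (simp add: power2_eq_square)
    then have "4*mu^2 \<le> P^2*mu^2" by (intro mult_right_mono) auto
    then show ?thesis by simp
  qed
  ultimately show "(xi^l+xi'^l)/(2*(cx/2)^l) - 1 - real l * v \<le> 101*4^l*P^2*mu^2"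
    unfolding Psi
  proof -
    assume a1: "4^l*w^2 \<le> 4^l*(100*P^2*mu^2)" and a2: "4*4^l*mu^2 \<le> 4^l*(P^2*mu^2)"
    have e1: "4^l*(100*P^2*mu^2) = 100*(4^l*(P^2*mu^2))" "(101::real)*4^l*P^2*mu^2 = 101*(4^l*(P^2*mu^2))"
      by (simp_all add: algebra_simps)
    show "R + (1+v)^l*((F-2)/2) \<le> 101*4^l*P^2*mu^2" using a1 a2 e1 hi R1 by linarith
  qed
qed


lemma KDil:
  fixes l :: nat and P cx h mu sg tg bt x y Gc Q H Psi0 :: real
  assumes l2: "2 \<le> l" and P1: "4*real l \<le> P" and P2: "1024*4^l \<le> P^2"
    and cx0: "0 < cx" and mu: "mu = h/cx" and mu0: "0 < mu" and Pmu: "P*mu \<le> 1"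
    and sg: "\<bar>sg\<bar> \<le> 2" and tg: "\<bar>tg\<bar> \<le> 1" and bt: "0 \<le> bt" "bt \<le> 1/(8000*4^l)"
    and Gc: "Gc = 2*(cx/2)^l" and Q: "Q = P^2*mu^2"
    and Psi0: "Psi0 = (Q/32 + 101*4^l*Q)/2" and H: "H = (101*4^l*Q - Q/32)/2"
    and x: "x = cx + sg*h" and y: "y = Gc*(1+Psi0) + sg*(Gc*real l*mu) + tg*((1+bt)*(Gc*H))"
  shows "0 < x" "Q/128 * (2*(x/2)^l) \<le> y - 2*(x/2)^l" "y - 2*(x/2)^l \<le> 204*4^l*Q*(2*(x/2)^l)"
proof -
  have P8: "8 \<le> P" using P1 l2 by linarith
  have PM2: "P^2*mu^2 \<le> 1"
  proof -
    have "(P*mu)^2 \<le> 1^2" using Pmu P8 mu0 by (intro power_mono) auto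
    then show ?thesis by (simp add: power_mult_distrib)
  qed
  have c1: "4*real l*mu \<le> 1"
  proof -
    have "4*real l*mu \<le> P*mu" using P1 mu0 by (intro mult_right_mono) auto
    then show ?thesis using Pmu by simp
  qed
  have c2: "32*4^l*mu^2 \<le> 1"
  proof -
    have "1024*4^l*mu^2 \<le> P^2*mu^2" using P2 mu0 by (intro mult_right_mono) auto
    then show ?thesis using PM2 by simp
  qed
  define v where "v = sg*mu"
  have v2: "\<bar>v\<bar> \<le> 2*mu" unfolding v_def using sg mu0 by (simp add: abs_mult mult_right_mono)
  note PN = pow_near1[OF v2 less_imp_le[OF mu0] c1 c2]
  define R where "R = (1+v)^l - 1 - real l * v"
  have R0: "0 \<le> R" and R1: "R \<le> 4*4^l*mu^2" using PN unfolding R_def by auto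
  have pw: "1/2 \<le> (1+v)^l" "(1+v)^l \<le> 2" using PN by auto
  have hm: "h = mu*cx" using mu cx0 by simp
  have xv: "x = cx*(1+v)" unfolding x v_def hm by (simp add: algebra_simps)
  have "cx*(1+v)/2 = (cx/2)*(1+v)" by simp
  then have Gx: "2*(x/2)^l = Gc*(1+v)^l" unfolding xv Gc by (simp only: power_mult_distrib)
  have Gc0: "0 < Gc" unfolding Gc using cx0 by simp
  have mu4: "mu \<le> 1/4"
  proof -
    have "4*mu \<le> 4*real l*mu" using l2 mu0 by (intro mult_right_mono) auto
    then show ?thesis using c1 by simp
  qed
  have "0 < 1 + v" using v2 mu4 by (auto simp: abs_le_iff)
  then show "0 < x" unfolding xv using cx0 by simp
  define Psi where "Psi = Psi0 + tg*(1+bt)*H"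
  have yv: "y = Gc*(1 + real l * v + Psi)" unfolding y Psi_def v_def by (simp add: algebra_simps)
  have dif: "y - 2*(x/2)^l = Gc*(Psi - R)" unfolding yv Gx R_def by (simp add: algebra_simps)
  have Q0: "0 \<le> Q" unfolding Q by simp
  have p4: "(1::real) \<le> 4^l" by simp
  have QQ: "1*Q \<le> 4^l*Q" by (rule mult_right_mono[OF p4 Q0])
  have H0: "0 \<le> H" unfolding H using Q0 QQ by simp
  have tH: "\<bar>tg*(1+bt)*H\<bar> \<le> (1+bt)*H"
  proof -
    have "\<bar>tg*(1+bt)*H\<bar> = \<bar>tg\<bar>*((1+bt)*H)" using bt H0 by (simp add: abs_mult)
    also have "\<dots> \<le> 1*((1+bt)*H)" using tg bt H0 by (intro mult_right_mono) auto
    finally show ?thesis by simp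
  qed
  have btH: "bt*H \<le> Q/128"
  proof -
    have "bt*H \<le> (1/(8000*4^l))*H" using bt H0 by (intro mult_right_mono) auto
    also have "\<dots> \<le> (1/(8000*4^l))*(101*4^l*Q/2)" unfolding H using Q0 by (intro mult_left_mono) auto
    also have "\<dots> = 101*Q/16000" by simp
    also have "\<dots> \<le> Q/128" using Q0 by simp
    finally show ?thesis .
  qed
  have Pl: "Q/32 - bt*H \<le> Psi" "Psi \<le> 101*4^l*Q + bt*H"

  proof -
    have e: "Psi0 - H = Q/32" "Psi0 + H = 101*4^l*Q" unfolding Psi0 H by (simp_all add: field_simps)
    have e2: "(1+bt)*H = H + bt*H" by (simp add: algebra_simps)
    have t: "- ((1+bt)*H) \<le> tg*(1+bt)*H" "tg*(1+bt)*H \<le> (1+bt)*H" using tH by (auto simp: abs_le_iff)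
    show "Q/32 - bt*H \<le> Psi" "Psi \<le> 101*4^l*Q + bt*H" unfolding Psi_def using e e2 t by linarith+
  qed
  have RQ: "R \<le> Q/128"
  proof -
    have "(512::real)*4^l \<le> 1024*4^l" by simp
    then have "512*4^l \<le> P^2" using P2 by linarith
    then have "512*4^l*mu^2 \<le> P^2*mu^2" by (intro mult_right_mono) auto
    then have "4*4^l*mu^2*128 \<le> P^2*mu^2" by simp
    then show ?thesis using R1 unfolding Q by simp
  qed
  have lo: "Q/64 \<le> Psi - R" using Pl btH RQ by linarith
  have hi: "Psi - R \<le> 102*4^l*Q"
  proof -
    have "Q/128 \<le> 4^l*Q" using Q0 QQ by simp
    then show ?thesis using Pl btH R0 by linarith
  qed
  show "Q/128 * (2*(x/2)^l) \<le> y - 2*(x/2)^l"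
  proof -
    have "Q/128 * (2*(x/2)^l) = (Q/64)*(Gc*((1+v)^l/2))" unfolding Gx by (simp add: algebra_simps)
    also have "\<dots> \<le> (Q/64)*(Gc*1)" using pw Q0 Gc0 by (intro mult_left_mono) auto
    also have "\<dots> \<le> (Psi - R)*Gc" using lo Gc0 by (simp add: mult_right_mono)
    finally show ?thesis unfolding dif by (simp add: algebra_simps)
  qed
  show "y - 2*(x/2)^l \<le> 204*4^l*Q*(2*(x/2)^l)"
  proof -
    have "y - 2*(x/2)^l = (Psi - R)*Gc" unfolding dif by simp
    also have "\<dots> \<le> (102*4^l*Q)*Gc" using hi Gc0 by (simp add: mult_right_mono)
    also have "\<dots> \<le> (102*4^l*Q)*(Gc*(2*(1+v)^l))"
      using pw Q0 Gc0 by (intro mult_left_mono) auto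
    also have "\<dots> = 204*4^l*Q*(2*(x/2)^l)" unfolding Gx by (simp add: algebra_simps)
    finally show ?thesis .
  qed
qed



lemma dint_eq: "dint k j = {of_int k * 2 powr of_int j ..< (of_int k + 1) * 2 powr of_int j}"
  unfolding dint_def by auto

lemma dint_inj: assumes "dint a j = dint b j'" shows "a = b \<and> j = j'"
proof -
  have p: "0 < (2::real) powr of_int j" "0 < (2::real) powr of_int j'" by auto
  have lt: "of_int a * 2 powr of_int j < (of_int a + 1) * 2 powr (of_int j::real)"
           "of_int b * 2 powr of_int j' < (of_int b + 1) * 2 powr (of_int j'::real)" using p by (auto simp: algebra_simps)
  from assms[unfolded dint_eq] have e: "of_int a * 2 powr of_int j = of_int b * 2 powr (of_int j'::real)"
    "(of_int a + 1) * 2 powr of_int j = (of_int b + 1) * 2 powr (of_int j'::real)"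
    using atLeastLessThan_eq_iff[OF lt] by auto
  then have "(2::real) powr of_int j = 2 powr of_int j'" by (simp add: algebra_simps)
  then have jj: "j = j'" using powr_inj[of 2 "of_int j" "of_int j'"] by simp
  then show ?thesis using e p by simp
qed

lemma adjacent_dint: "adjacent (dint a j) (dint b j) \<longleftrightarrow> \<bar>a - b\<bar> = 1"
proof
  assume "adjacent (dint a j) (dint b j)"
  then obtain a' b' j' where "dint a j = dint a' j'" "dint b j = dint b' j'" "\<bar>a' - b'\<bar> = 1"
    unfolding adjacent_def by blast
  then show "\<bar>a - b\<bar> = 1" using dint_inj by blast
next
  assume "\<bar>a - b\<bar> = 1" then show "adjacent (dint a j) (dint b j)" unfolding adjacent_def by blast
qed

lemma div_close:
  fixes k k' M :: int assumes "0 < M" "\<bar>k div M - k' div M\<bar> \<le> 1"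
  shows "\<bar>k - k'\<bar> < 2*M"
proof -
  have a: "k = M*(k div M) + k mod M" "k' = M*(k' div M) + k' mod M" by simp_all
  have m: "0 \<le> k mod M" "k mod M < M" "0 \<le> k' mod M" "k' mod M < M" using assms by simp_all
  have "M*(k div M) - M*(k' div M) = M*(k div M - k' div M)" by (simp add: algebra_simps)
  moreover have "\<bar>M*(k div M - k' div M)\<bar> \<le> M*1" using assms by (simp add: abs_mult mult_left_mono)
  ultimately show ?thesis using a m by linarith
qed

lemma div_far:
  fixes k k' M :: int assumes "0 < M" "2 \<le> \<bar>k div M - k' div M\<bar>"
  shows "M < \<bar>k - k'\<bar>"
proof -
  have a: "k = M*(k div M) + k mod M" "k' = M*(k' div M) + k' mod M" by simp_all
  have m: "0 \<le> k mod M" "k mod M < M" "0 \<le> k' mod M" "k' mod M < M" using assms by simp_all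
  have "M*(k div M) - M*(k' div M) = M*(k div M - k' div M)" by (simp add: algebra_simps)
  moreover have "M*2 \<le> \<bar>M*(k div M - k' div M)\<bar>" using assms by (simp add: abs_mult mult_left_mono)
  ultimately show ?thesis using a m by linarith
qed

lemma dsim_struct:
  assumes "dsim N \<tau> \<tau>'" "1 \<le> N"
  shows "\<exists>k k' j. \<tau> = dint k j \<and> \<tau>' = dint k' j \<and> 2^(N-1) < \<bar>k-k'\<bar> \<and> \<bar>k-k'\<bar> < 2^(N+1)"
proof -
  obtain k k' j where t: "\<tau> = dint k j" "\<tau>' = dint k' j"
    and na: "\<forall>m<N. \<not> adjacent (dparent m k j) (dparent m k' j)"
    and ad: "adjacent (dparent N k j) (dparent N k' j)" using assms(1) unfolding dsim_def by blast
  have ad1: "\<bar>k div 2^N - k' div 2^N\<bar> = 1" using ad unfolding dparent_def adjacent_dint .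
  have "\<not> adjacent (dparent (N-1) k j) (dparent (N-1) k' j)" using na assms(2) by simp
  then have n1: "\<bar>k div 2^(N-1) - k' div 2^(N-1)\<bar> \<noteq> 1" unfolding dparent_def adjacent_dint .
  have pN: "(2::int)^N = 2^(N-1)*2" 
  proof -
    obtain M where "N = Suc M" using assms(2) by (cases N) auto
    then show ?thesis by simp
  qed
  have dd: "x div 2^N = (x div 2^(N-1)) div 2" for x :: int unfolding pN by (rule zdiv_zmult2_eq) simp
  have ne: "k div 2^(N-1) \<noteq> k' div 2^(N-1)"
  proof
    assume "k div 2^(N-1) = k' div 2^(N-1)"
    then have "k div 2^N = k' div 2^N" using dd by simp
    then show False using ad1 by simp
  qed
  have far: "2 \<le> \<bar>k div 2^(N-1) - k' div 2^(N-1)\<bar>" using ne n1 by linarith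
  have "2^(N-1) < \<bar>k-k'\<bar>" using div_far[OF _ far] by simp
  moreover have "\<bar>k-k'\<bar> < 2*2^N" using div_close[of "2^N" k k'] ad1 by simp
  ultimately show ?thesis using t by auto
qed

lemma dint_nonneg: assumes "dint k j \<subseteq> {0..}" shows "0 \<le> k"
proof -
  have "of_int k * 2 powr of_int j \<in> dint k j" unfolding dint_def by simp
  then have "0 \<le> of_int k * (2::real) powr of_int j" using assms by auto
  then show ?thesis by (simp add: zero_le_mult_iff)
qed

lemma msum_dint:
  "msum (dint k j) (dint k' j) = {of_int (k+k') * 2 powr of_int j ..< (of_int (k+k') + 2) * 2 powr of_int j}"
  (is "_ = {?a ..< ?b}")
proof
  let ?h = "(2::real) powr of_int j"
  show "msum (dint k j) (dint k' j) \<subseteq> {?a..<?b}"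
    unfolding msum_def dint_def by (auto simp: algebra_simps)
  show "{?a..<?b} \<subseteq> msum (dint k j) (dint k' j)"
  proof
    fix x assume x: "x \<in> {?a..<?b}"
    define e where "e = (x - ?a)/2"
    have e: "0 \<le> e" "e < ?h" using x unfolding e_def by (auto simp: algebra_simps)
    have "of_int k * ?h + e \<in> dint k j" "of_int k' * ?h + e \<in> dint k' j"
      unfolding dint_def using e by (auto simp: algebra_simps)
    moreover have "x = (of_int k * ?h + e) + (of_int k' * ?h + e)" unfolding e_def by (simp add: algebra_simps)
    ultimately show "x \<in> msum (dint k j) (dint k' j)" unfolding msum_def by blast
  qed
qed



definition PPl :: "nat \<Rightarrow> real" where "PPl l = 2^(l+5)"
definition hJ :: "real set \<Rightarrow> real" where "hJ J = (Sup J - Inf J)/2"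
definition cxJ :: "real set \<Rightarrow> real" where "cxJ J = Inf J + hJ J"
definition muJ :: "real set \<Rightarrow> real" where "muJ J = hJ J / cxJ J"
definition QJ :: "nat \<Rightarrow> real set \<Rightarrow> real" where "QJ l J = PPl l^2 * muJ J^2"
definition GcJ :: "nat \<Rightarrow> real set \<Rightarrow> real" where "GcJ l J = 2*(cxJ J/2)^l"
definition Psi0J :: "nat \<Rightarrow> real set \<Rightarrow> real" where "Psi0J l J = (QJ l J/32 + 101*4^l*QJ l J)/2"
definition HJ :: "nat \<Rightarrow> real set \<Rightarrow> real" where "HJ l J = (101*4^l*QJ l J - QJ l J/32)/2"
definition goodJ :: "real set \<Rightarrow> bool" where "goodJ J \<longleftrightarrow> 0 < hJ J \<and> 0 < cxJ J"
definition RcF :: "nat \<Rightarrow> real set \<Rightarrow> real \<times> real" where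
  "RcF l J = (cxJ J, GcJ l J*(1 + Psi0J l J))"
definition RuF :: "nat \<Rightarrow> real set \<Rightarrow> real \<times> real" where
  "RuF l J = (if goodJ J then (hJ J, GcJ l J*real l*muJ J) else (1,0))"
definition RvF :: "nat \<Rightarrow> real set \<Rightarrow> real \<times> real" where
  "RvF l J = (if goodJ J then (0, GcJ l J*HJ l J) else (0,1))"

lemma nondeg_all: "nondeg (RuF l J) (RvF l J)"
proof (cases "goodJ J")
  case True
  then have h: "0 < hJ J" "0 < cxJ J" unfolding goodJ_def by auto
  have mu: "0 < muJ J" unfolding muJ_def using h by simp
  have Q: "0 < QJ l J" unfolding QJ_def PPl_def using mu by simp
  have p4: "(1::real) \<le> 4^l" by simp
  have "QJ l J/32 < QJ l J*1" using Q by simp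
  also have "QJ l J*1 \<le> QJ l J * 4^l" using Q p4 by (intro mult_left_mono) auto
  also have "\<dots> \<le> 101*4^l*QJ l J" using Q by simp
  finally have H: "0 < HJ l J" unfolding HJ_def by simp
  have G: "0 < GcJ l J" unfolding GcJ_def using h by simp
  show ?thesis using True h H G unfolding nondeg_def RuF_def RvF_def by simp
next
  case False
  then show ?thesis unfolding nondeg_def RuF_def RvF_def by simp
qed

lemma Jvals:
  fixes k k' j :: int
  assumes "0 \<le> k+k'"
  defines "J \<equiv> msum (dint k j) (dint k' j)"
  shows "hJ J = 2 powr of_int j" "cxJ J = (of_int (k+k') + 1) * 2 powr of_int j"
        "muJ J = 1/(of_int (k+k') + 1)" "goodJ J"
proof -
  let ?h = "(2::real) powr of_int j"
  have h: "0 < ?h" by simp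
  have lt: "of_int (k+k') * ?h < (of_int (k+k') + 2) * ?h" using h by (simp add: algebra_simps)
  have I: "Inf J = of_int (k+k') * ?h" "Sup J = (of_int (k+k') + 2) * ?h"
    unfolding J_def msum_dint using lt by simp_all
  show hh: "hJ J = ?h" unfolding hJ_def I by (simp add: algebra_simps)
  show cc: "cxJ J = (of_int (k+k') + 1) * ?h" unfolding cxJ_def hh I by (simp add: algebra_simps)
  have s: "0 < real_of_int (k+k') + 1" using assms(1) by linarith
  show "muJ J = 1/(of_int (k+k') + 1)" unfolding muJ_def hh cc using h s by simp
  show "goodJ J" unfolding goodJ_def hh cc using h s by simp
qed

lemma P_facts: assumes "2 \<le> l" shows "4*real l \<le> PPl l" "1024*4^l \<le> (PPl l)^2"
proof -
  have "l < 2^l" by (rule less_exp)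
  then have "real l \<le> 2^l" by (metis less_imp_le of_nat_le_iff of_nat_numeral of_nat_power)
  moreover have "(2::real)^(l+5) = 32*2^l" by (simp add: power_add)
  ultimately show "4*real l \<le> PPl l" unfolding PPl_def by linarith
  have "(2::real)^(l+5) * 2^(l+5) = 1024 * (2^l*2^l)" by (simp add: power_add)
  also have "(2::real)^l*2^l = 4^l" by (simp add: power_mult_distrib[symmetric])
  finally show "1024*4^l \<le> (PPl l)^2" unfolding PPl_def by (simp add: power2_eq_square)
qed



definition btl :: "nat \<Rightarrow> real" where "btl l = 1/(8000*4^l)"

lemma pair_struct:
  assumes "dsim (l+6) \<tau> \<tau>'" "\<tau> \<subseteq> {0..}" "\<tau>' \<subseteq> {0..}"
  shows "\<exists>k k' j. \<tau> = dint k j \<and> \<tau>' = dint k' j \<and> 0 \<le> k \<and> 0 \<le> k' \<and>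
     PPl l < \<bar>real_of_int (k-k')\<bar> \<and> \<bar>real_of_int (k-k')\<bar> < 4*PPl l"
proof -
  obtain k k' j where t: "\<tau> = dint k j" "\<tau>' = dint k' j" and
    b: "2^(l+6-1) < \<bar>k-k'\<bar>" "\<bar>k-k'\<bar> < 2^(l+6+1)"
    using dsim_struct[OF assms(1)] by auto
  have ee: "l+6-1 = l+5" "l+6+1 = l+7" by simp_all
  have b1: "real_of_int (2^(l+5)) < real_of_int \<bar>k-k'\<bar>" using b(1) unfolding ee by (simp only: of_int_less_iff)
  have b2: "real_of_int \<bar>k-k'\<bar> < real_of_int (2^(l+7))" using b(2) unfolding ee by (simp only: of_int_less_iff)
  have e: "(2::real)^(l+7) = 4*2^(l+5)" by (simp add: power_add)
  have "0 \<le> k" "0 \<le> k'" using dint_nonneg assms(2,3) t by auto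
  then show ?thesis using t b1 b2 e unfolding PPl_def by (intro exI[of _ k] exI[of _ k'] exI[of _ j]) auto
qed

lemma CONT:
  fixes k k' j :: int
  assumes l2: "2 \<le> l" and k: "0 \<le> k" "0 \<le> k'"
    and d: "PPl l < \<bar>real_of_int (k-k')\<bar>" "\<bar>real_of_int (k-k')\<bar> < 4*PPl l"
  shows "Sl l (dint k j) (dint k' j) \<subseteq> pgram (RcF l (msum (dint k j) (dint k' j)))
     (RuF l (msum (dint k j) (dint k' j))) (RvF l (msum (dint k j) (dint k' j)))"
proof
  fix p assume "p \<in> Sl l (dint k j) (dint k' j)"
  then obtain xi xi' where p: "p = (xi+xi', xi^l+xi'^l)" and xi: "xi \<in> dint k j" and xi': "xi' \<in> dint k' j"
    unfolding Sl_def by blast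
  define J where "J = msum (dint k j) (dint k' j)"
  define h where "h = (2::real) powr of_int j"
  define cx where "cx = (of_int (k+k') + 1) * h"
  define mu where "mu = 1/(of_int (k+k') + (1::real))"
  define P where "P = PPl l"
  define Q where "Q = P^2*mu^2"
  define Gc where "Gc = 2*(cx/2)^l"
  define H where "H = (101*4^l*Q - Q/32)/2"
  define Psi0 where "Psi0 = (Q/32 + 101*4^l*Q)/2"
  have s0: "0 \<le> k+k'" using k by simp
  note JV = Jvals[OF s0, of j, folded J_def h_def]
  have h0: "0 < h" unfolding h_def by simp
  have s1: "0 < real_of_int (k+k') + 1" using s0 by linarith
  have cx0: "0 < cx" unfolding cx_def using h0 s1 by simp
  have mu0: "0 < mu" unfolding mu_def using s1 by simp
  have muh: "mu = h/cx" unfolding mu_def cx_def using h0 s1 by simp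
  have RcE: "RcF l J = (cx, Gc*(1+Psi0))" unfolding RcF_def GcJ_def Psi0J_def QJ_def
    using JV unfolding cx_def Gc_def Psi0_def Q_def P_def mu_def by (simp add: algebra_simps)
  have RuE: "RuF l J = (h, Gc*real l*mu)" unfolding RuF_def GcJ_def
    using JV unfolding cx_def Gc_def mu_def by (simp add: algebra_simps)
  have RvE: "RvF l J = (0, Gc*H)" unfolding RvF_def GcJ_def HJ_def QJ_def
    using JV unfolding cx_def Gc_def H_def Q_def P_def mu_def by (simp add: algebra_simps)
  have xib: "of_int k*h \<le> xi" "xi \<le> (of_int k+1)*h" "of_int k'*h \<le> xi'" "xi' \<le> (of_int k'+1)*h"
    using xi xi' unfolding dint_def h_def by auto
  have PF: "4*real l \<le> P" "1024*4^l \<le> P^2" using P_facts[OF l2] unfolding P_def by auto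
  define v where "v = (xi+xi'-cx)/cx"
  define Psi where "Psi = (xi^l+xi'^l)/(2*(cx/2)^l) - 1 - real l * v"
  have K: "P^2*mu^2/32 \<le> Psi" "Psi \<le> 101*4^l*P^2*mu^2"
    using KPsi[OF l2 PF(1) PF(2) h0, of "of_int k" "of_int k'" xi xi' cx mu v] k d xib
    unfolding Psi_def P_def cx_def mu_def v_def by (auto simp: abs_of_nonneg)
  have Q0: "0 \<le> Q" unfolding Q_def by simp
  have e1: "Psi0 - H = Q/32" "Psi0 + H = 101*4^l*Q" unfolding Psi0_def H_def by (simp_all add: field_simps)
  have Kq: "Q/32 \<le> Psi" "Psi \<le> 101*4^l*Q" using K unfolding Q_def by (simp_all add: algebra_simps)
  have H0: "0 < H"
  proof -
    have "Q/32 \<le> Psi0" "Psi0 \<le> 101*4^l*Q" using e1 Kq by linarith+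
    have p4: "(1::real) \<le> 4^l" by simp
    have Qp: "0 < Q" unfolding Q_def P_def PPl_def using mu0 by simp
    have "Q/32 < Q*1" using Qp by simp
    also have "Q*1 \<le> Q * 4^l" using Qp p4 by (intro mult_left_mono) auto
    also have "\<dots> \<le> 101*4^l*Q" using Qp by simp
    finally show ?thesis unfolding H_def by simp
  qed
  have Gc0: "0 < Gc" unfolding Gc_def using cx0 by simp
  define sg where "sg = (xi+xi'-cx)/h"
  define tg where "tg = (Psi - Psi0)/H"
  have sg1: "\<bar>sg\<bar> \<le> 1"
  proof -
    have "\<bar>xi+xi'-cx\<bar> \<le> h" using xib unfolding cx_def by (auto simp: algebra_simps abs_le_iff)
    then show ?thesis unfolding sg_def using h0 by (simp add: abs_div)
  qed
  have tg1: "\<bar>tg\<bar> \<le> 1"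
  proof -
    have "\<bar>Psi - Psi0\<bar> \<le> H" using e1 Kq by (auto simp: abs_le_iff)
    then show ?thesis unfolding tg_def using H0 by (simp add: abs_div)
  qed
  have fst_eq: "cx + sg*h = xi+xi'" unfolding sg_def using h0 by simp
  have y1: "xi^l+xi'^l = Gc*(1 + real l * v + Psi)" unfolding Psi_def Gc_def using cx0 by (simp add: field_simps)
  have v_eq: "sg*mu = v" unfolding sg_def v_def muh using h0 cx0 by simp
  have snd_eq: "Gc*(1+Psi0) + sg*(Gc*real l*mu) + tg*(Gc*H) = xi^l+xi'^l"
  proof -
    have "tg*H = Psi - Psi0" unfolding tg_def using H0 by simp
    have "Gc*(1+Psi0) + sg*(Gc*real l*mu) + tg*(Gc*H) = Gc*(1 + Psi0 + real l*(sg*mu) + tg*H)"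
      by (simp add: algebra_simps)
    also have "\<dots> = Gc*(1 + real l * v + Psi)" using \<open>tg*H = Psi - Psi0\<close> v_eq by simp
    finally show ?thesis using y1 by simp
  qed
  have "p = RcF l J + sg *\<^sub>R RuF l J + tg *\<^sub>R RvF l J"
    unfolding RcE RuE RvE p using fst_eq snd_eq by (simp add: algebra_simps)
  then show "p \<in> pgram (RcF l (msum (dint k j) (dint k' j)))
     (RuF l (msum (dint k j) (dint k' j))) (RvF l (msum (dint k j) (dint k' j)))"
    unfolding pgram_def J_def[symmetric] using sg1 tg1 by blast
qed


lemma DILP:
  fixes k k' j :: int
  assumes l2: "2 \<le> l" and k: "0 \<le> k" "0 \<le> k'"
    and d: "PPl l < \<bar>real_of_int (k-k')\<bar>"
    and pin: "p \<in> dil_pgram (btl l) (RcF l (msum (dint k j) (dint k' j)))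
     (RuF l (msum (dint k j) (dint k' j))) (RvF l (msum (dint k j) (dint k' j)))"
  defines "h \<equiv> (2::real) powr of_int j"
  defines "cx \<equiv> (of_int (k+k') + 1) * h"
  defines "mu \<equiv> 1/(of_int (k+k') + (1::real))"
  defines "Q \<equiv> (PPl l)^2*mu^2"
  shows "0 < fst p" "\<bar>fst p - cx\<bar> \<le> 2*h" "Q/128 * (2*(fst p/2)^l) \<le> snd p - 2*(fst p/2)^l"
    "snd p - 2*(fst p/2)^l \<le> 204*4^l*Q*(2*(fst p/2)^l)"
    "0 < cx" "0 < mu" "mu = h/cx" "mu \<le> 1/4" "0 < h"
proof -
  define J where "J = msum (dint k j) (dint k' j)"
  define P where "P = PPl l"
  define Gc where "Gc = 2*(cx/2)^l"
  define H where "H = (101*4^l*Q - Q/32)/2"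
  define Psi0 where "Psi0 = (Q/32 + 101*4^l*Q)/2"
  have s0: "0 \<le> k+k'" using k by simp
  note JV = Jvals[OF s0, of j, folded J_def h_def]
  show h0: "0 < h" unfolding h_def by simp
  have s1: "0 < real_of_int (k+k') + 1" using s0 by linarith
  show cx0: "0 < cx" unfolding cx_def using h0 s1 by simp
  show mu0: "0 < mu" unfolding mu_def using s1 by simp
  show muh: "mu = h/cx" unfolding mu_def cx_def using h0 s1 by simp
  have RcE: "RcF l J = (cx, Gc*(1+Psi0))" unfolding RcF_def GcJ_def Psi0J_def QJ_def
    using JV unfolding cx_def Gc_def Psi0_def Q_def mu_def by (simp add: algebra_simps)
  have RuE: "RuF l J = (h, Gc*real l*mu)" unfolding RuF_def GcJ_def
    using JV unfolding cx_def Gc_def mu_def by (simp add: algebra_simps)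
  have RvE: "RvF l J = (0, Gc*H)" unfolding RvF_def GcJ_def HJ_def QJ_def
    using JV unfolding cx_def Gc_def H_def Q_def mu_def by (simp add: algebra_simps)
  have PF: "4*real l \<le> P" "1024*4^l \<le> P^2" using P_facts[OF l2] unfolding P_def by auto
  have sP: "P \<le> real_of_int (k+k')" using d k unfolding P_def by linarith
  have Pmu: "P*mu \<le> 1"
  proof -
    have "P*mu \<le> (real_of_int (k+k')+1)*mu" using sP mu0 by (intro mult_right_mono) auto
    then show ?thesis unfolding mu_def using s1 by simp
  qed
  obtain sa ta where st: "\<bar>sa\<bar> \<le> 1" "\<bar>ta\<bar> \<le> 1"
    and pe: "p = RcF l J + sa *\<^sub>R ((1 + btl l) *\<^sub>R RuF l J) + ta *\<^sub>R ((1 + btl l) *\<^sub>R RvF l J)"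
    using pin unfolding dil_pgram_def pgram_def J_def by blast
  have bt: "0 \<le> btl l" "btl l \<le> 1/(8000*4^l)" unfolding btl_def by simp_all
  have p4: "(1::real) \<le> 4^l" by simp
  then have "(1::real) \<le> 8000*4^l" by linarith
  then have bt1: "btl l \<le> 1" unfolding btl_def by simp
  define sg where "sg = sa*(1+btl l)"
  have sg2: "\<bar>sg\<bar> \<le> 2"
  proof -
    have "\<bar>sg\<bar> = \<bar>sa\<bar>*(1+btl l)" unfolding sg_def using bt by (simp add: abs_mult)
    also have "\<dots> \<le> 1*2" using st bt bt1 by (intro mult_mono) auto
    finally show ?thesis by simp
  qed
  have px: "fst p = cx + sg*h" unfolding pe RcE RuE RvE sg_def by (simp add: algebra_simps)
  have py: "snd p = Gc*(1+Psi0) + sg*(Gc*real l*mu) + ta*((1+btl l)*(Gc*H))"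
    unfolding pe RcE RuE RvE sg_def by (simp add: algebra_simps)
  note KD = KDil[OF l2 PF(1) PF(2) cx0 muh mu0 Pmu sg2 st(2) bt Gc_def _ Psi0_def H_def px py]
  have QQ: "Q = P^2*mu^2" unfolding Q_def P_def ..
  show "0 < fst p" "Q/128 * (2*(fst p/2)^l) \<le> snd p - 2*(fst p/2)^l"
    "snd p - 2*(fst p/2)^l \<le> 204*4^l*Q*(2*(fst p/2)^l)" using KD[OF QQ] by auto
  show "\<bar>fst p - cx\<bar> \<le> 2*h"
  proof -
    have "\<bar>sg*h\<bar> \<le> 2*h" using sg2 h0 by (simp add: abs_mult mult_right_mono)
    then show ?thesis using px by simp
  qed
  have "4*mu \<le> 4*real l*mu" using l2 mu0 by (intro mult_right_mono) auto
  also have "\<dots> \<le> P*mu" using PF mu0 by (intro mult_right_mono) auto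
  finally show "mu \<le> 1/4" using Pmu by simp
qed

lemma COMP:
  fixes l :: nat and P cx h mu cx1 h1 mu1 x G D :: real
  assumes P0: "0 < P" and mu: "mu = h/cx" and mu1: "mu1 = h1/cx1" and cx: "0 < cx" "0 < cx1"
    and m0: "0 < mu" "0 < mu1" and m4: "mu \<le> 1/4" "mu1 \<le> 1/4"
    and x: "\<bar>x - cx\<bar> \<le> 2*h" "\<bar>x - cx1\<bar> \<le> 2*h1" and G: "0 < G"
    and D: "(P^2*mu^2)/128*G \<le> D" "D \<le> 204*4^l*(P^2*mu1^2)*G"
  shows "h \<le> 2^(l+10)*h1"
proof -
  have "(P^2*mu^2)/128*G \<le> (204*4^l*(P^2*mu1^2))*G" using D by linarith
  then have "(P^2*mu^2)/128 \<le> 204*4^l*(P^2*mu1^2)" by (rule mult_right_le_imp_le[OF _ G])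
  then have "P^2*mu^2 \<le> P^2*(26112*4^l*mu1^2)" by (simp add: algebra_simps)
  then have a: "mu^2 \<le> 26112*4^l*mu1^2" using P0 by simp
  have b: "(26112::real)*4^l*mu1^2 \<le> (2^(l+8)*mu1)^2"
  proof -
    have "((2::real)^l)^2 = (2^l)*(2^l)" by (rule power2_eq_square)
    also have "\<dots> = (2*2)^l" by (rule power_mult_distrib[symmetric])
    finally have f: "((2::real)^l)^2 = 4^l" by (simp only: mult_2 numeral_Bit0) simp
    have g: "(2::real)^(l+8) = 256*2^l" by (simp add: power_add)
    have sq3: "(256*(t::real)*m)^2 = 65536*(t*t)*m^2" for t m by (simp add: power2_eq_square algebra_simps)
    have "(2^(l+8)*mu1)^2 = (65536::real)*((2::real)^l*2^l)*mu1^2"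
      unfolding g by (rule sq3)
    then have "(2^(l+8)*mu1)^2 = (65536::real)*4^l*mu1^2" using f by (simp add: power2_eq_square)
    then show ?thesis by simp
  qed
  have "mu^2 \<le> (2^(l+8)*mu1)^2" using a b by linarith
  then have mm: "mu \<le> 2^(l+8)*mu1" by (rule power2_le_imp_le) (use m0 in simp)
  have hm: "h = mu*cx" "h1 = mu1*cx1" using mu mu1 cx by auto
  have c1: "cx \<le> 2*x"
  proof -
    have "2*h \<le> cx/2" using hm m4 cx by simp
    then show ?thesis using x by (auto simp: abs_le_iff)
  qed
  have c2: "x \<le> (3/2)*cx1"
  proof -
    have "2*h1 \<le> cx1/2" using hm m4 cx by simp
    then show ?thesis using x by (auto simp: abs_le_iff)
  qed
  have "h = mu*cx" by (rule hm(1))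
  also have "\<dots> \<le> (2^(l+8)*mu1)*(3*cx1)" using mm c1 c2 m0 cx by (intro mult_mono) auto
  also have "\<dots> = 3*2^(l+8)*h1" using hm by simp
  also have "\<dots> \<le> 4*2^(l+8)*h1" using hm m0 cx by (intro mult_right_mono) auto
  also have "\<dots> = 2^(l+10)*h1" by (simp add: power_add)
  finally show ?thesis .
qed



lemma POS:
  fixes l :: nat and P h1 cx cx1 k1 k1' x h :: real
  assumes h1: "0 < h1" and cx1: "cx1 = (k1+k1'+1)*h1" and d: "\<bar>k1-k1'\<bar> \<le> 4*P"
    and x: "\<bar>x - cx\<bar> \<le> 2*h" "\<bar>x - cx1\<bar> \<le> 2*h1" and hh: "h \<le> 2^(l+10)*h1"
  shows "\<bar>k1 - cx/(2*h1)\<bar> \<le> 2*P + 2^(l+11)"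
proof -
  have X: "(2::real)^(l+11) = 2*2^(l+10)" by (simp add: power_add)
  have X3: "(3::real) \<le> 2^(l+11)"
  proof -
    have "(2::real)^11 \<le> 2^(l+11)" by (intro power_increasing) auto
    then show ?thesis by simp
  qed
  have c: "\<bar>cx - cx1\<bar> \<le> 2^(l+11)*h1 + 2*h1" using x hh X by (auto simp: abs_le_iff)
  have e: "2*k1*h1 - cx = (k1-k1'-1)*h1 + (cx1 - cx)" unfolding cx1 by (simp add: algebra_simps)
  have f: "\<bar>(k1-k1'-1)*h1\<bar> \<le> (4*P+1)*h1"
  proof -
    have "\<bar>(k1-k1'-1)*h1\<bar> = \<bar>k1-k1'-1\<bar>*h1" using h1 by (simp add: abs_mult)
    also have "\<dots> \<le> (4*P+1)*h1" using d h1 by (intro mult_right_mono) (auto simp: abs_le_iff)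
    finally show ?thesis .
  qed
  have g: "\<bar>2*k1*h1 - cx\<bar> \<le> (2*P + 2^(l+11))*(2*h1)"
  proof -
    have "\<bar>2*k1*h1 - cx\<bar> \<le> (4*P+1)*h1 + (2^(l+11)*h1 + 2*h1)" unfolding e using f c
      by (smt (verit) abs_triangle_ineq abs_minus_commute)
    also have "\<dots> = (4*P + 3 + 2^(l+11))*h1" by (simp add: algebra_simps)
    also have "\<dots> \<le> (4*P + 2*2^(l+11))*h1" using X3 h1 by (intro mult_right_mono) auto
    also have "\<dots> = (2*P + 2^(l+11))*(2*h1)" by (simp add: algebra_simps)
    finally show ?thesis .
  qed
  have "k1 - cx/(2*h1) = (2*k1*h1 - cx)/(2*h1)" using h1 by (simp add: field_simps)
  then have "\<bar>k1 - cx/(2*h1)\<bar> = \<bar>2*k1*h1 - cx\<bar>/(2*h1)" using h1 by (simp add: abs_div)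
  also have "\<dots> \<le> 2*P + 2^(l+11)" using g h1 by (simp add: divide_le_eq)
  finally show ?thesis .
qed

lemma jbound:
  fixes j j1 :: int
  assumes "(2::real) powr of_int j \<le> 2^(l+10) * 2 powr of_int j1"
  shows "j \<le> j1 + int l + 10"
proof -
  have "(2::real)^(l+10) = 2 powr real (l+10)" by (rule powr_realpow[symmetric]) simp
  then have "(2::real) powr of_int j \<le> 2 powr (real (l+10) + of_int j1)" using assms by (simp add: powr_add)
  then have "real_of_int j \<le> real (l+10) + of_int j1" by simp
  then show ?thesis by linarith
qed

definition Rn :: "nat \<Rightarrow> nat" where "Rn l = 2*2^(l+5) + 2^(l+11)"
definition Cn :: "nat \<Rightarrow> nat" where "Cn l = (2*l+21)*(2*Rn l+3)^2"



lemma card_int_sym: "card {-(a::int)..a} = nat (2*a+1)"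
  by simp

lemma COUNT:
  assumes l2: "2 \<le> l" and H: "dsim (l+6) \<tau> \<tau>' \<and> \<tau> \<subseteq> {0..} \<and> \<tau>' \<subseteq> {0..}"
  shows "let P = {(\<tau>1, \<tau>1'). dsim (l+6) \<tau>1 \<tau>1' \<and> \<tau>1 \<subseteq> {0..} \<and> \<tau>1' \<subseteq> {0..} \<and>
                  dil_pgram (btl l) (RcF l (msum \<tau> \<tau>')) (RuF l (msum \<tau> \<tau>')) (RvF l (msum \<tau> \<tau>')) \<inter>
                  dil_pgram (btl l) (RcF l (msum \<tau>1 \<tau>1')) (RuF l (msum \<tau>1 \<tau>1')) (RvF l (msum \<tau>1 \<tau>1')) \<noteq> {}}
         in finite P \<and> card P \<le> Cn l"
proof -
  obtain k k' j where t: "\<tau> = dint k j" "\<tau>' = dint k' j" and k: "0 \<le> k" "0 \<le> k'"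
    and d: "PPl l < \<bar>real_of_int (k-k')\<bar>" "\<bar>real_of_int (k-k')\<bar> < 4*PPl l"
    using pair_struct[of l \<tau> \<tau>'] H by blast
  define PS where "PS = {(\<tau>1, \<tau>1'). dsim (l+6) \<tau>1 \<tau>1' \<and> \<tau>1 \<subseteq> {0..} \<and> \<tau>1' \<subseteq> {0..} \<and>
                  dil_pgram (btl l) (RcF l (msum \<tau> \<tau>')) (RuF l (msum \<tau> \<tau>')) (RvF l (msum \<tau> \<tau>')) \<inter>
                  dil_pgram (btl l) (RcF l (msum \<tau>1 \<tau>1')) (RuF l (msum \<tau>1 \<tau>1')) (RvF l (msum \<tau>1 \<tau>1')) \<noteq> {}}"
  define cx where "cx = (of_int (k+k') + 1) * (2::real) powr of_int j"
  define c where "c = int l + 10"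
  define Ri where "Ri = int (Rn l)"
  define fl where "fl i = \<lfloor>cx/(2*2 powr of_int (j+i))\<rfloor>" for i
  define f where "f = (\<lambda>(i, r, r'). (dint (fl i + r) (j+i), dint (fl i + r') (j+i)))"
  define S where "S = {-c..c} \<times> {-(Ri+1)..Ri+1} \<times> {-(Ri+1)..Ri+1}"
  have RiR: "real_of_int Ri = 2*PPl l + 2^(l+11)" unfolding Ri_def Rn_def PPl_def by simp
  have P0: "0 < PPl l" unfolding PPl_def by simp
  have sub: "PS \<subseteq> f ` S"
  proof
    fix q assume "q \<in> PS"
    then obtain \<tau>1 \<tau>1' where q: "q = (\<tau>1, \<tau>1')" and H1: "dsim (l+6) \<tau>1 \<tau>1'" "\<tau>1 \<subseteq> {0..}" "\<tau>1' \<subseteq> {0..}"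
      and ne: "dil_pgram (btl l) (RcF l (msum \<tau> \<tau>')) (RuF l (msum \<tau> \<tau>')) (RvF l (msum \<tau> \<tau>')) \<inter>
                  dil_pgram (btl l) (RcF l (msum \<tau>1 \<tau>1')) (RuF l (msum \<tau>1 \<tau>1')) (RvF l (msum \<tau>1 \<tau>1')) \<noteq> {}"
      unfolding PS_def by blast
    obtain k1 k1' j1 where t1: "\<tau>1 = dint k1 j1" "\<tau>1' = dint k1' j1" and k1: "0 \<le> k1" "0 \<le> k1'"
      and d1: "PPl l < \<bar>real_of_int (k1-k1')\<bar>" "\<bar>real_of_int (k1-k1')\<bar> < 4*PPl l"
      using pair_struct[of l \<tau>1 \<tau>1'] H1 by blast
    obtain p where p1: "p \<in> dil_pgram (btl l) (RcF l (msum (dint k j) (dint k' j))) (RuF l (msum (dint k j) (dint k' j))) (RvF l (msum (dint k j) (dint k' j)))"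
      and p2: "p \<in> dil_pgram (btl l) (RcF l (msum (dint k1 j1) (dint k1' j1))) (RuF l (msum (dint k1 j1) (dint k1' j1))) (RvF l (msum (dint k1 j1) (dint k1' j1)))"
      using ne unfolding t t1 by blast
    note A = DILP[OF l2 k d(1) p1]
    note B = DILP[OF l2 k1 d1(1) p2]
    define G where "G = 2*(fst p/2)^l"
    have G0: "0 < G" unfolding G_def using A(1) by simp
    have hh1: "(2::real) powr of_int j \<le> 2^(l+10) * 2 powr of_int j1"
      using COMP[OF P0 A(7) B(7) A(5) B(5) A(6) B(6) A(8) B(8) A(2) B(2) G0[unfolded G_def] A(3) B(4)] .
    have hh2: "(2::real) powr of_int j1 \<le> 2^(l+10) * 2 powr of_int j"
      using COMP[OF P0 B(7) A(7) B(5) A(5) B(6) A(6) B(8) A(8) B(2) A(2) G0[unfolded G_def] B(3) A(4)] .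
    have jb: "j \<le> j1 + c" "j1 \<le> j + c" using jbound[OF hh1] jbound[OF hh2] unfolding c_def by auto
    define i where "i = j1 - j"
    have iS: "i \<in> {-c..c}" unfolding i_def using jb by auto
    define h1 where "h1 = (2::real) powr of_int j1"
    have h10: "0 < h1" unfolding h1_def by simp
    have flE: "fl i = \<lfloor>cx/(2*h1)\<rfloor>" unfolding fl_def i_def h1_def by simp
    have cx1: "(of_int (k1+k1') + 1) * h1 = (of_int k1 + of_int k1' + 1)*h1" by simp
    have dd1: "\<bar>real_of_int k1 - of_int k1'\<bar> \<le> 4*PPl l" "\<bar>real_of_int k1' - of_int k1\<bar> \<le> 4*PPl l"
      using d1 by auto
    have cx1': "(of_int (k1+k1') + 1) * h1 = (of_int k1' + of_int k1 + 1)*h1" by simp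
    have pos1: "\<bar>of_int k1 - cx/(2*h1)\<bar> \<le> 2*PPl l + 2^(l+11)"
      using POS[OF h10 cx1 dd1(1) A(2)[folded cx_def] B(2)[folded h1_def] hh1[folded h1_def]] .
    have pos2: "\<bar>of_int k1' - cx/(2*h1)\<bar> \<le> 2*PPl l + 2^(l+11)"
      using POS[OF h10 cx1' dd1(2) A(2)[folded cx_def] B(2)[folded h1_def] hh1[folded h1_def]] .
    have rr: "k1 - fl i \<in> {-(Ri+1)..Ri+1}" if pp: "\<bar>of_int k1 - cx/(2*h1)\<bar> \<le> 2*PPl l + 2^(l+11)" for k1
    proof -
      have fb: "cx/(2*h1) - 1 < of_int (fl i)" "of_int (fl i) \<le> cx/(2*h1)" unfolding flE by linarith+
      have "real_of_int (k1 - fl i) \<le> real_of_int Ri + 1" "- real_of_int Ri - 1 \<le> real_of_int (k1 - fl i)"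
        using pp fb RiR by (auto simp: abs_le_iff)
      then show ?thesis by simp
    qed
    have "q = f (i, k1 - fl i, k1' - fl i)" unfolding q t1 f_def i_def by simp
    moreover have "(i, k1 - fl i, k1' - fl i) \<in> S" unfolding S_def using iS rr[OF pos1] rr[OF pos2] by simp
    ultimately show "q \<in> f ` S" by blast
  qed
  have fS: "finite S" unfolding S_def by simp
  have cS: "card S = Cn l"
  proof -
    have "card S = card {-c..c} * (card {-(Ri+1)..Ri+1} * card {-(Ri+1)..Ri+1})"
      unfolding S_def by (simp add: card_cartesian_product)
    also have "\<dots> = (2*l+21)*((2*Rn l+3)*(2*Rn l+3))" unfolding c_def Ri_def by (simp add: nat_add_distrib nat_mult_distrib add.commute)
    finally show ?thesis unfolding Cn_def by (simp add: power2_eq_square)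
  qed
  have "finite PS" using sub fS finite_surj by blast
  moreover have "card PS \<le> Cn l"
    using card_mono[OF finite_imageI[OF fS] sub] card_image_le[OF fS, of f] cS by linarith
  ultimately show ?thesis unfolding PS_def[symmetric] Let_def by blast
qed

theorem mainTheorem11:
  fixes l :: nat
  assumes "l > 1" and "odd l"
  shows "\<exists>N::nat. \<exists>Rc Ru Rv :: real set \<Rightarrow> real \<times> real.
     (\<forall>J. nondeg (Ru J) (Rv J)) \<and>
     (\<forall>\<tau> \<tau>'. dsim N \<tau> \<tau>' \<and> \<tau> \<subseteq> {0..} \<and> \<tau>' \<subseteq> {0..} \<longrightarrow>
        Sl l \<tau> \<tau>' \<subseteq> pgram (Rc (msum \<tau> \<tau>')) (Ru (msum \<tau> \<tau>')) (Rv (msum \<tau> \<tau>'))) \<and>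
     (\<exists>\<beta>>0. \<exists>C::nat. \<forall>\<tau> \<tau>'. dsim N \<tau> \<tau>' \<and> \<tau> \<subseteq> {0..} \<and> \<tau>' \<subseteq> {0..} \<longrightarrow>
        (let P = {(\<tau>1, \<tau>1'). dsim N \<tau>1 \<tau>1' \<and> \<tau>1 \<subseteq> {0..} \<and> \<tau>1' \<subseteq> {0..} \<and>
                  dil_pgram \<beta> (Rc (msum \<tau> \<tau>')) (Ru (msum \<tau> \<tau>')) (Rv (msum \<tau> \<tau>')) \<inter>
                  dil_pgram \<beta> (Rc (msum \<tau>1 \<tau>1')) (Ru (msum \<tau>1 \<tau>1')) (Rv (msum \<tau>1 \<tau>1')) \<noteq> {}}
         in finite P \<and> card P \<le> C))"
proof -
  have l2: "2 \<le> l" using assms(1) by simp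
  have bt0: "btl l > 0" unfolding btl_def by simp
  have C2: "\<forall>\<tau> \<tau>'. dsim (l+6) \<tau> \<tau>' \<and> \<tau> \<subseteq> {0..} \<and> \<tau>' \<subseteq> {0..} \<longrightarrow>
        Sl l \<tau> \<tau>' \<subseteq> pgram (RcF l (msum \<tau> \<tau>')) (RuF l (msum \<tau> \<tau>')) (RvF l (msum \<tau> \<tau>'))"
  proof (intro allI impI)
    fix \<tau> \<tau>' assume H: "dsim (l+6) \<tau> \<tau>' \<and> \<tau> \<subseteq> {0..} \<and> \<tau>' \<subseteq> {0..}"
    obtain k k' j where t: "\<tau> = dint k j" "\<tau>' = dint k' j" and k: "0 \<le> k" "0 \<le> k'"
      and d: "PPl l < \<bar>real_of_int (k-k')\<bar>" "\<bar>real_of_int (k-k')\<bar> < 4*PPl l"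
      using pair_struct[of l \<tau> \<tau>'] H by blast
    show "Sl l \<tau> \<tau>' \<subseteq> pgram (RcF l (msum \<tau> \<tau>')) (RuF l (msum \<tau> \<tau>')) (RvF l (msum \<tau> \<tau>'))"
      unfolding t by (rule CONT[OF l2 k d])
  qed
  show ?thesis
    apply (rule exI[of _ "l+6"], rule exI[of _ "RcF l"], rule exI[of _ "RuF l"], rule exI[of _ "RvF l"])
    apply (rule conjI)
     apply (rule allI, rule nondeg_all)
    apply (rule conjI)
     apply (rule C2)
    apply (rule exI[of _ "btl l"])
    apply (rule conjI[OF bt0])
    apply (rule exI[of _ "Cn l"])
    apply (intro allI impI)
    apply (rule COUNT[OF l2])
    apply assumption
    done
qed


end
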